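(* Consider a single user with $N$ movable antennas at positions $\mathbf w=[w_1,\dots,w_N]^T$, power $P>0$, aperture $W>0$, $L$ propagation paths, and channel $\mathbf G(\mathbf w)=\sqrt{MN}\,\mathbf A_{\mathrm R}\boldsymbol\Gamma\mathbf A_{\mathrm T}^H(\mathbf w)\in\mathbb C^{M\times N}$. Let $\mathcal W=\{\mathbf w\in\mathbb R^N:0\le w_n\le W\ \forall n,\ w_n\ne w_{n'}\ \forall n\ne n'\}$. Consider the problems $$\text{(A)}:\ \max_{\mathbf Q,\mathbf w}\ \log|\mathbf G(\mathbf w)\mathbf Q\mathbf G^H(\mathbf w)+\mathbf I_M|\ \text{ s.t. } \mathbf Q\in\mathbb C^{N\times N},\ \mathbf Q\succeq\mathbf 0,\ \mathrm{tr}(\mathbf Q)\le P,\ \mathbf w\in\mathcal W,$$ $$\text{(B)}:\ \max_{\mathbf F,\mathbf w}\ \log|\mathbf G^H(\mathbf w)\mathbf F\mathbf G(\mathbf w)+\mathbf I_N|\ \text{ s.t. } \mathbf F\in\mathbb C^{M\times M},\ \mathbf F\succeq\mathbf 0,\ \mathrm{tr}(\mathbf F)\le P,\ \mathbf w\in\mathcal W,$$ and, for fixed $\mathbf w$, the subproblems (A$_{\mathbf w}$): maximize the objective of (A) over $\mathbf Q\succeq\mathbf 0$, $\mathrm{tr}(\mathbf Q)\le P$; and (B$_{\mathbf w}$): maximize the objective of (B) over $\mathbf F\succeq\mathbf 0$, $\mathrm{tr}(\mathbf F)\le P$. Suppose $(\mathbf Q^*,\mathbf w^* )$ is an optimal solution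 of (A) and $(\mathbf F^\divideontimes,\mathbf w^\divideontimes)$ is an optimal solution of (B). Then: 1. $\log|\mathbf G(\mathbf w^* )\mathbf Q^*\mathbf G^H(\mathbf w^* )+\mathbf I_M|=\log|\mathbf G^H(\mathbf w^\divideontimes)\mathbf F^\divideontimes\mathbf G(\mathbf w^\divideontimes)+\mathbf I_N|$. 2. If $\mathbf F^*$ is an optimal solution of (B$_{\mathbf w^*}$), then $(\mathbf F^*,\mathbf w^* )$ is an optimal solution of (B), and $\log|\mathbf G^H(\mathbf w^* )\mathbf F^*\mathbf G(\mathbf w^* )+\mathbf I_N|=\log|\mathbf G^H(\mathbf w^\divideontimes)\mathbf F^\divideontimes\mathbf G(\mathbf w^\divideontimes)+\mathbf I_N|$. 3. If $\mathbf Q^\divideontimes$ is an optimal solution of (A$_{\mathbf w^\divideontimes}$), then $(\mathbf Q^\divideontimes,\mathbf w^\divideontimes)$ is an optimal solution of (A), and $\log|\mathbf G(\mathbf w^* )\mathbf Q^*\mathbf G^H(\mathbf w^* )+\mathbf I_M|=\log|\mathbf G(\mathbf w^\divideontimes)\mathbf Q^\divideontimes\mathbf G^H(\mathbf w^\divideontimes)+\mathbf I_M|$.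
   Context: The base station has an $M$-antenna uniform linear array with spacing $d=\lambda/2$ ($\lambda$ the wavelength). The $L$ paths have complex gains $\gamma_l$, angles of arrival $\beta_l\in[0,\pi]$ and angles of departure $\theta_l\in[0,\pi]$. $\mathbf a_{\mathrm R}(\beta)=\frac1{\sqrt M}[1,e^{-j\frac{2\pi}{\lambda}d\cos\beta},\dots,e^{-j\frac{2\pi}{\lambda}(M-1)d\cos\beta}]^T$, $\mathbf a_{\mathrm T}(\theta,\mathbf w)=\frac1{\sqrt N}[e^{-j\frac{2\pi}{\lambda}w_1\cos\theta},\dots,e^{-j\frac{2\pi}{\lambda}w_N\cos\theta}]^T$, $\mathbf A_{\mathrm R}=[\mathbf a_{\mathrm R}(\beta_l)]_{l=1}^L\in\mathbb C^{M\times L}$, $\mathbf A_{\mathrm T}(\mathbf w)=[\mathbf a_{\mathrm T}(\theta_l,\mathbf w)]_{l=1}^L\in\mathbb C^{N\times L}$, $\boldsymbol\Gamma=\mathrm{diag}(\gamma_1,\dots,\gamma_L)$. $|\cdot|$ denotes determinant. *)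

theory Defs
  imports "Jordan_Normal_Form.Schur_Decomposition"
begin

text \<open>Receive steering matrix A_R = [a_R(beta_l)]_l (M x L), ULA with spacing d = lam/2;
  antenna index m = 0..M-1.\<close>
definition A_R :: "nat \<Rightarrow> nat \<Rightarrow> real \<Rightarrow> (nat \<Rightarrow> real) \<Rightarrow> complex mat" where
  "A_R M L lam beta = mat M L (\<lambda>(m, l).
      exp (- \<i> * complex_of_real (2 * pi / lam * (real m * (lam / 2)) * cos (beta l)))
      / complex_of_real (sqrt (real M)))"

text \<open>Transmit steering matrix A_T(w) = [a_T(theta_l, w)]_l (N x L); antenna n = 0..N-1
  sits at position w $ n.\<close>
definition A_T :: "nat \<Rightarrow> nat \<Rightarrow> real \<Rightarrow> (nat \<Rightarrow> real) \<Rightarrow> real vec \<Rightarrow> complex mat" where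
  "A_T N L lam theta w = mat N L (\<lambda>(n, l).
      exp (- \<i> * complex_of_real (2 * pi / lam * (w $ n) * cos (theta l)))
      / complex_of_real (sqrt (real N)))"

definition Gamma_mat :: "nat \<Rightarrow> (nat \<Rightarrow> complex) \<Rightarrow> complex mat" where
  "Gamma_mat L gamma = mat L L (\<lambda>(i, j). if i = j then gamma i else 0)"

definition chan :: "nat \<Rightarrow> nat \<Rightarrow> nat \<Rightarrow> real \<Rightarrow> (nat \<Rightarrow> complex) \<Rightarrow> (nat \<Rightarrow> real)
    \<Rightarrow> (nat \<Rightarrow> real) \<Rightarrow> real vec \<Rightarrow> complex mat" where
  "chan M N L lam gamma beta theta w =
     complex_of_real (sqrt (real (M * N))) \<cdot>\<^sub>m
       (A_R M L lam beta * Gamma_mat L gamma * mat_adjoint (A_T N L lam theta w))"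

definition psd :: "nat \<Rightarrow> complex mat \<Rightarrow> bool" where
  "psd n Q \<longleftrightarrow> Q \<in> carrier_mat n n \<and> mat_adjoint Q = Q \<and>
     (\<forall>x \<in> carrier_vec n. Im (conjugate x \<bullet> (Q *\<^sub>v x)) = 0 \<and> Re (conjugate x \<bullet> (Q *\<^sub>v x)) \<ge> 0)"

definition posset :: "nat \<Rightarrow> real \<Rightarrow> real vec set" where
  "posset N W = {w. dim_vec w = N \<and> (\<forall>n<N. 0 \<le> w $ n \<and> w $ n \<le> W) \<and>
                    (\<forall>n<N. \<forall>n'<N. n \<noteq> n' \<longrightarrow> w $ n \<noteq> w $ n')}"

definition mtrace :: "complex mat \<Rightarrow> complex" where
  "mtrace Q = (\<Sum>i<dim_row Q. Q $$ (i, i))"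

definition cov_feas :: "nat \<Rightarrow> real \<Rightarrow> complex mat \<Rightarrow> bool" where
  "cov_feas n P Q \<longleftrightarrow> psd n Q \<and> Re (mtrace Q) \<le> P"

definition objA :: "complex mat \<Rightarrow> complex mat \<Rightarrow> real" where
  "objA G Q = ln (Re (det (G * Q * mat_adjoint G + 1\<^sub>m (dim_row G))))"

definition objB :: "complex mat \<Rightarrow> complex mat \<Rightarrow> real" where
  "objB G F = ln (Re (det (mat_adjoint G * F * G + 1\<^sub>m (dim_col G))))"

definition optA :: "(real vec \<Rightarrow> complex mat) \<Rightarrow> nat \<Rightarrow> real \<Rightarrow> real \<Rightarrow> complex mat \<Rightarrow> real vec \<Rightarrow> bool" where
  "optA Gf N W P Q w \<longleftrightarrow> cov_feas N P Q \<and> w \<in> posset N W \<and>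
     (\<forall>Q' w'. cov_feas N P Q' \<and> w' \<in> posset N W \<longrightarrow> objA (Gf w') Q' \<le> objA (Gf w) Q)"

definition optB :: "(real vec \<Rightarrow> complex mat) \<Rightarrow> nat \<Rightarrow> nat \<Rightarrow> real \<Rightarrow> real \<Rightarrow> complex mat \<Rightarrow> real vec \<Rightarrow> bool" where
  "optB Gf M N W P F w \<longleftrightarrow> cov_feas M P F \<and> w \<in> posset N W \<and>
     (\<forall>F' w'. cov_feas M P F' \<and> w' \<in> posset N W \<longrightarrow> objB (Gf w') F' \<le> objB (Gf w) F)"

definition optA_w :: "(real vec \<Rightarrow> complex mat) \<Rightarrow> nat \<Rightarrow> real \<Rightarrow> real vec \<Rightarrow> complex mat \<Rightarrow> bool" where
  "optA_w Gf N P w Q \<longleftrightarrow> cov_feas N P Q \<and>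
     (\<forall>Q'. cov_feas N P Q' \<longrightarrow> objA (Gf w) Q' \<le> objA (Gf w) Q)"

definition optB_w :: "(real vec \<Rightarrow> complex mat) \<Rightarrow> nat \<Rightarrow> real \<Rightarrow> real vec \<Rightarrow> complex mat \<Rightarrow> bool" where
  "optB_w Gf M P w F \<longleftrightarrow> cov_feas M P F \<and>
     (\<forall>F'. cov_feas M P F' \<longrightarrow> objB (Gf w) F' \<le> objB (Gf w) F)"

end

theory Submission
  imports Defs
begin


lemma adj_def2: "mat_adjoint (A::complex mat) = mat (dim_col A) (dim_row A) (\<lambda>(i,j). cnj (A $$ (j,i)))"
  unfolding mat_adjoint_def by (rule eq_matI, auto simp: mat_of_rows_def)

lemma adj_dims[simp]: "dim_row (mat_adjoint (A::complex mat)) = dim_col A"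
   "dim_col (mat_adjoint (A::complex mat)) = dim_row A"
  by (auto simp: adj_def2)

lemma adj_carrier[simp]: "(A::complex mat) \<in> carrier_mat m n \<Longrightarrow> mat_adjoint A \<in> carrier_mat n m"
  by (metis adj_dims carrier_matD carrier_matI)

lemma adj_index[simp]: "i < dim_col A \<Longrightarrow> j < dim_row A \<Longrightarrow> mat_adjoint (A::complex mat) $$ (i,j) = cnj (A $$ (j,i))"
  by (auto simp: adj_def2)

lemma adj_adj[simp]: "mat_adjoint (mat_adjoint (A::complex mat)) = A"
  by (rule eq_matI, auto)

lemma adj_mult: assumes "(A::complex mat) \<in> carrier_mat m n" "B \<in> carrier_mat n k"
  shows "mat_adjoint (A * B) = mat_adjoint B * mat_adjoint A"
  by (rule eq_matI, insert assms, auto simp: scalar_prod_def cnj_sum mult.commute)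

lemma adj_one[simp]: "mat_adjoint (1\<^sub>m n :: complex mat) = 1\<^sub>m n"
  by (rule eq_matI, auto)

lemma adj_zero[simp]: "mat_adjoint (0\<^sub>m n m :: complex mat) = 0\<^sub>m m n"
  by (rule eq_matI, auto)

lemma adj_add: assumes "(A::complex mat) \<in> carrier_mat m n" "B \<in> carrier_mat m n"
  shows "mat_adjoint (A + B) = mat_adjoint A + mat_adjoint B"
  by (rule eq_matI, insert assms, auto)

lemma add_cancel_aux: "X \<in> carrier_mat n m \<Longrightarrow> Y \<in> carrier_mat n m \<Longrightarrow> X + Y + - Y = (X::complex mat)"
  by (rule eq_matI, auto)

lemma add_cancel_aux3: "X \<in> carrier_mat n m \<Longrightarrow> Y \<in> carrier_mat n m \<Longrightarrow> - Y + (X + Y) = (X::complex mat)"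
  by (rule eq_matI, auto)

lemma syl_b1: fixes A B :: "complex mat" assumes A: "A \<in> carrier_mat m n" and B: "B \<in> carrier_mat n m"
  shows "four_block_mat (1\<^sub>m m) (-A) (0\<^sub>m n m) (1\<^sub>m n) * four_block_mat (1\<^sub>m m + A * B) (0\<^sub>m m n) B (1\<^sub>m n)
    = four_block_mat (1\<^sub>m m) (-A) B (1\<^sub>m n)"
proof -
  have AB: "A * B \<in> carrier_mat m m" using A B by auto
  have "four_block_mat (1\<^sub>m m) (-A) (0\<^sub>m n m) (1\<^sub>m n) * four_block_mat (1\<^sub>m m + A * B) (0\<^sub>m m n) B (1\<^sub>m n)
   = four_block_mat (1\<^sub>m m * (1\<^sub>m m + A * B) + (-A) * B) (1\<^sub>m m * 0\<^sub>m m n + (-A) * 1\<^sub>m n)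
        (0\<^sub>m n m * (1\<^sub>m m + A * B) + 1\<^sub>m n * B) (0\<^sub>m n m * 0\<^sub>m m n + 1\<^sub>m n * 1\<^sub>m n)"
    by (rule mult_four_block_mat, insert A B AB, auto)
  also have "1\<^sub>m m * (1\<^sub>m m + A * B) + (-A) * B = 1\<^sub>m m"
  proof -
    have "1\<^sub>m m * (1\<^sub>m m + A * B) + (-A) * B = (1\<^sub>m m + A * B) + - (A * B)"
      using A B AB by simp
    also have "\<dots> = 1\<^sub>m m" using add_cancel_aux[OF _ AB] by simp
    finally show ?thesis .
  qed
  also have "1\<^sub>m m * 0\<^sub>m m n + (-A) * 1\<^sub>m n = -A" using A by simp
  also have "0\<^sub>m n m * (1\<^sub>m m + A * B) + 1\<^sub>m n * B = B"
  proof -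
    have "1\<^sub>m m + A * B \<in> carrier_mat m m" using AB by simp
    from left_mult_zero_mat[OF this, of n] show ?thesis using B by simp
  qed
  also have "0\<^sub>m n m * 0\<^sub>m m n + 1\<^sub>m n * 1\<^sub>m n = (1\<^sub>m n :: complex mat)" by simp
  finally show ?thesis .
qed

lemma syl_b2: fixes A B :: "complex mat" assumes A: "A \<in> carrier_mat m n" and B: "B \<in> carrier_mat n m"
  shows "four_block_mat (1\<^sub>m m) (0\<^sub>m m n) B (1\<^sub>m n + B * A) * four_block_mat (1\<^sub>m m) (-A) (0\<^sub>m n m) (1\<^sub>m n)
    = four_block_mat (1\<^sub>m m) (-A) B (1\<^sub>m n)"
proof -
  have BA: "B * A \<in> carrier_mat n n" using A B by auto
  have "four_block_mat (1\<^sub>m m) (0\<^sub>m m n) B (1\<^sub>m n + B * A) * four_block_mat (1\<^sub>m m) (-A) (0\<^sub>m n m) (1\<^sub>m n)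
    = four_block_mat (1\<^sub>m m * 1\<^sub>m m + 0\<^sub>m m n * 0\<^sub>m n m) (1\<^sub>m m * (-A) + 0\<^sub>m m n * 1\<^sub>m n)
        (B * 1\<^sub>m m + (1\<^sub>m n + B * A) * 0\<^sub>m n m) (B * (-A) + (1\<^sub>m n + B * A) * 1\<^sub>m n)"
    by (rule mult_four_block_mat, insert A B BA, auto)
  also have "B * (-A) + (1\<^sub>m n + B * A) * 1\<^sub>m n = 1\<^sub>m n"
  proof -
    have "B * (-A) + (1\<^sub>m n + B * A) * 1\<^sub>m n = - (B * A) + (1\<^sub>m n + B * A)"
      using A B BA by simp
    also have "\<dots> = 1\<^sub>m n" using add_cancel_aux3[OF _ BA] by simp
    finally show ?thesis .
  qed
  also have "1\<^sub>m m * 1\<^sub>m m + 0\<^sub>m m n * 0\<^sub>m n m = (1\<^sub>m m :: complex mat)" by simp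
  also have "1\<^sub>m m * (-A) + 0\<^sub>m m n * 1\<^sub>m n = -A" using A by simp
  also have "B * 1\<^sub>m m + (1\<^sub>m n + B * A) * 0\<^sub>m n m = B"
  proof -
    have "1\<^sub>m n + B * A \<in> carrier_mat n n" using BA by simp
    from right_mult_zero_mat[OF this, of m] show ?thesis using B by simp
  qed
  finally show ?thesis .
qed

lemma syl_d1: fixes A :: "complex mat" assumes A: "A \<in> carrier_mat m n"
  shows "det (four_block_mat (1\<^sub>m m) (-A) (0\<^sub>m n m) (1\<^sub>m n)) = 1"
  by (subst det_four_block_mat_lower_left_zero[where n=m and m=n], insert A, auto)

lemma syl_d2: fixes X B :: "complex mat" assumes X: "X \<in> carrier_mat m m" and B: "B \<in> carrier_mat n m"
  shows "det (four_block_mat X (0\<^sub>m m n) B (1\<^sub>m n)) = det X"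
  by (subst det_four_block_mat_upper_right_zero[where n=m and m=n], insert X B, auto)

lemma syl_d3: fixes X B :: "complex mat" assumes X: "X \<in> carrier_mat n n" and B: "B \<in> carrier_mat n m"
  shows "det (four_block_mat (1\<^sub>m m) (0\<^sub>m m n) B X) = det X"
  by (subst det_four_block_mat_upper_right_zero[where n=m and m=n], insert X B, auto)

lemma sylvester: fixes A B :: "complex mat" assumes A: "A \<in> carrier_mat m n" and B: "B \<in> carrier_mat n m"
  shows "det (1\<^sub>m m + A * B) = det (1\<^sub>m n + B * A)"
proof -
  have AB: "1\<^sub>m m + A * B \<in> carrier_mat m m" and BA: "1\<^sub>m n + B * A \<in> carrier_mat n n" using A B by auto
  have L1: "four_block_mat (1\<^sub>m m) (-A) (0\<^sub>m n m) (1\<^sub>m n) \<in> carrier_mat (m+n) (m+n)"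
    and R1: "four_block_mat (1\<^sub>m m + A * B) (0\<^sub>m m n) B (1\<^sub>m n) \<in> carrier_mat (m+n) (m+n)"
    and L2: "four_block_mat (1\<^sub>m m) (0\<^sub>m m n) B (1\<^sub>m n + B * A) \<in> carrier_mat (m+n) (m+n)"
    using four_block_carrier_mat[OF one_carrier_mat one_carrier_mat]
      four_block_carrier_mat[OF AB one_carrier_mat] four_block_carrier_mat[OF one_carrier_mat BA] by auto
  have "det (1\<^sub>m m + A * B) = det (four_block_mat (1\<^sub>m m) (-A) B (1\<^sub>m n))"
    unfolding syl_b1[OF A B, symmetric] det_mult[OF L1 R1] syl_d1[OF A] syl_d2[OF AB B] by simp
  also have "\<dots> = det (1\<^sub>m n + B * A)"
    unfolding syl_b2[OF A B, symmetric] det_mult[OF L2 L1] syl_d1[OF A] syl_d3[OF BA B] by simp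
  finally show ?thesis .
qed

lemma mtrace_comm: fixes A B :: "complex mat" assumes A: "A \<in> carrier_mat m n" and B: "B \<in> carrier_mat n m"
  shows "mtrace (A * B) = mtrace (B * A)"
proof -
  have "mtrace (A * B) = (\<Sum>i<m. \<Sum>j<n. A $$ (i,j) * B $$ (j,i))"
    unfolding mtrace_def using A B by (auto simp: scalar_prod_def intro!: sum.cong simp: atLeast0LessThan)
  also have "\<dots> = (\<Sum>j<n. \<Sum>i<m. B $$ (j,i) * A $$ (i,j))"
    by (subst sum.swap, simp add: mult.commute)
  also have "\<dots> = mtrace (B * A)"
    unfolding mtrace_def using A B by (auto simp: scalar_prod_def intro!: sum.cong simp: atLeast0LessThan)
  finally show ?thesis .
qed



lemma row_adj: "i < dim_col (W::complex mat) \<Longrightarrow> row (mat_adjoint W) i = conjugate (col W i)"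
  by (rule eq_vecI, auto)

lemma quad_adj: fixes X :: "complex mat"
  assumes X: "X \<in> carrier_mat m n" and x: "x \<in> carrier_vec m" and y: "y \<in> carrier_vec n"
  shows "conjugate x \<bullet> (X *\<^sub>v y) = conjugate (mat_adjoint X *\<^sub>v x) \<bullet> y"
proof -
  have "conjugate x \<bullet> (X *\<^sub>v y) = (\<Sum>i\<in>{0..<m}. \<Sum>j\<in>{0..<n}. cnj (x $ i) * (X $$ (i,j) * y $ j))"
    using X x y by (auto simp: scalar_prod_def sum_distrib_left intro!: sum.cong)
  also have "\<dots> = (\<Sum>j\<in>{0..<n}. \<Sum>i\<in>{0..<m}. cnj (x $ i) * (X $$ (i,j) * y $ j))"
    by (rule sum.swap)
  also have "\<dots> = conjugate (mat_adjoint X *\<^sub>v x) \<bullet> y"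
    using X x y by (auto simp: scalar_prod_def sum_distrib_right cnj_sum intro!: sum.cong)
  finally show ?thesis .
qed

lemma psd_congr: fixes X Q :: "complex mat"
  assumes Q: "psd n Q" and X: "X \<in> carrier_mat m n"
  shows "psd m (X * Q * mat_adjoint X)"
proof -
  have Qc: "Q \<in> carrier_mat n n" and QH: "mat_adjoint Q = Q" using Q unfolding psd_def by auto
  have XQ: "X * Q \<in> carrier_mat m n" using X Qc by auto
  have "mat_adjoint (X * Q * mat_adjoint X) = X * Q * mat_adjoint X"
    using adj_mult[OF XQ adj_carrier[OF X]] adj_mult[OF X Qc] QH X Qc
    by (simp add: assoc_mult_mat[OF X Qc adj_carrier[OF X]])
  moreover
  { fix x :: "complex vec" assume x: "x \<in> carrier_vec m"
    define y where "y = mat_adjoint X *\<^sub>v x"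
    have y: "y \<in> carrier_vec n" unfolding y_def by (rule mult_mat_vec_carrier[OF adj_carrier[OF X] x])
    have "(X * Q * mat_adjoint X) *\<^sub>v x = X *\<^sub>v (Q *\<^sub>v y)"
      unfolding y_def using assoc_mult_mat_vec[OF XQ adj_carrier[OF X] x] assoc_mult_mat_vec[OF X Qc y[unfolded y_def]] by simp
    hence "conjugate x \<bullet> ((X * Q * mat_adjoint X) *\<^sub>v x) = conjugate y \<bullet> (Q *\<^sub>v y)"
      using quad_adj[OF X x, of "Q *\<^sub>v y"] Qc y unfolding y_def by auto
    hence "Im (conjugate x \<bullet> ((X * Q * mat_adjoint X) *\<^sub>v x)) = 0 \<and> Re (conjugate x \<bullet> ((X * Q * mat_adjoint X) *\<^sub>v x)) \<ge> 0"
      using Q y unfolding psd_def by auto }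
  ultimately show ?thesis unfolding psd_def using X Qc by auto
qed

lemma psd_diag: assumes Q: "psd n Q" and i: "i < n"
  shows "Q $$ (i,i) = complex_of_real (Re (Q $$ (i,i)))" "Re (Q $$ (i,i)) \<ge> 0"
proof -
  have Qc: "Q \<in> carrier_mat n n" and QH: "mat_adjoint Q = Q" using Q unfolding psd_def by auto
  have h: "cnj (Q $$ (i,i)) = Q $$ (i,i)" using arg_cong[OF QH, of "\<lambda>M. M $$ (i,i)"] Qc i by auto
  have "Im (Q $$ (i,i)) = 0" using arg_cong[OF h, of Im] by simp
  thus "Q $$ (i,i) = complex_of_real (Re (Q $$ (i,i)))" by (simp add: complex_eq_iff)
  have "conjugate (unit_vec n i) \<bullet> (Q *\<^sub>v unit_vec n i) = Q $$ (i,i)"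
  proof -
    have "conjugate (unit_vec n i) = (unit_vec n i :: complex vec)" by (rule eq_vecI, auto simp: unit_vec_def)
    moreover have "(Q *\<^sub>v unit_vec n i) $ i = Q $$ (i,i)" using Qc i by auto
    ultimately show ?thesis using Qc i by simp
  qed
  moreover have "0 \<le> Re (conjugate (unit_vec n i) \<bullet> (Q *\<^sub>v unit_vec n i))"
    using Q unit_vec_carrier[of n i] unfolding psd_def by blast
  ultimately show "Re (Q $$ (i,i)) \<ge> 0" by simp
qed

lemma psd_one: "psd n (1\<^sub>m n)"
  unfolding psd_def
proof (intro conjI ballI)
  fix x :: "complex vec" assume x: "x \<in> carrier_vec n"
  have e: "conjugate x \<bullet> (1\<^sub>m n *\<^sub>v x) = (\<Sum>i\<in>{0..<n}. cnj (x $ i) * x $ i)"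
    using x by (auto simp: scalar_prod_def intro!: sum.cong)
  show "Im (conjugate x \<bullet> (1\<^sub>m n *\<^sub>v x)) = 0" unfolding e Im_sum by simp
  show "Re (conjugate x \<bullet> (1\<^sub>m n *\<^sub>v x)) \<ge> 0" unfolding e Re_sum
    by (rule sum_nonneg, simp)
qed auto



lemma cnorm_pos: fixes w :: "complex vec" assumes w: "w \<in> carrier_vec n" and nz: "w \<bullet>c w \<noteq> 0"
  shows "w \<bullet>c w = complex_of_real (Re (w \<bullet>c w))" "Re (w \<bullet>c w) > 0"
proof -
  have "w \<bullet>c w \<ge> 0" using conjugate_square_ge_0_vec[of w] by simp
  hence "Im (w \<bullet>c w) = 0" "Re (w \<bullet>c w) \<ge> 0" by (auto simp: less_eq_complex_def)
  thus "w \<bullet>c w = complex_of_real (Re (w \<bullet>c w))" by (simp add: complex_eq_iff)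
  with nz \<open>Re (w \<bullet>c w) \<ge> 0\<close> show "Re (w \<bullet>c w) > 0"
    by (metis less_eq_real_def of_real_0)
qed

lemma unit_extension: fixes v :: "complex vec"
  assumes v: "v \<in> carrier_vec n" and v0: "v \<noteq> 0\<^sub>v n"
  shows "\<exists>W c. W \<in> carrier_mat n n \<and> mat_adjoint W * W = 1\<^sub>m n \<and> col W 0 = c \<cdot>\<^sub>v v"
proof -
  interpret cof_vec_space n "TYPE(complex)" .
  define b where "b = basis_completion v"
  from basis_completion[OF v v0, folded b_def]
  have span_b: "span (set b) = carrier_vec n" and dist_b: "distinct b"
    and indep: "\<not> lin_dep (set b)" and b: "set b \<subseteq> carrier_vec n" and hdb: "hd b = v"
    and len_b: "length b = n" by auto
  have n: "n \<noteq> 0"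
  proof
    assume "n = 0"
    hence "v = 0\<^sub>v n" using v by (intro eq_vecI) auto
    with v0 show False by simp
  qed
  from hdb len_b n obtain vs where bv: "b = v # vs" by (cases b, auto)
  define ws where "ws = gram_schmidt n b"
  from gram_schmidt_result[OF b dist_b indep refl, folded ws_def]
  have ws: "set ws \<subseteq> carrier_vec n" "corthogonal ws" "length ws = n"
    by (auto simp: len_b)
  from gram_schmidt_hd[OF v, of vs, folded bv] have hdws: "hd ws = v" unfolding ws_def .
  define sc where "sc = (\<lambda>w::complex vec. complex_of_real (1 / sqrt (Re (w \<bullet>c w))))"
  define ws' where "ws' = map (\<lambda>w. sc w \<cdot>\<^sub>v w) ws"
  define W where "W = mat_of_cols n ws'"
  have len': "length ws' = n" unfolding ws'_def using ws by simp
  have wsi: "i < n \<Longrightarrow> ws ! i \<in> carrier_vec n" for i using ws by auto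
  have ws'i: "i < n \<Longrightarrow> ws' ! i = sc (ws ! i) \<cdot>\<^sub>v ws ! i" for i unfolding ws'_def using ws by simp
  have ws'c: "i < n \<Longrightarrow> ws' ! i \<in> carrier_vec n" for i using ws'i wsi by simp
  have colW: "i < n \<Longrightarrow> col W i = ws' ! i" for i unfolding W_def using len' ws'c by simp
  have Wc: "W \<in> carrier_mat n n" unfolding W_def using len' by auto
  have nz: "i < n \<Longrightarrow> ws ! i \<bullet>c ws ! i \<noteq> 0" for i using ws(2) ws(3) unfolding corthogonal_def by auto
  have orth: "i < n \<Longrightarrow> j < n \<Longrightarrow> i \<noteq> j \<Longrightarrow> ws ! j \<bullet>c ws ! i = 0" for i j
    using ws(2) ws(3) unfolding corthogonal_def by auto
  have "mat_adjoint W * W = 1\<^sub>m n"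
  proof (rule eq_matI)
    fix i j assume i: "i < dim_row (1\<^sub>m n :: complex mat)" and j: "j < dim_col (1\<^sub>m n :: complex mat)"
    hence i: "i < n" and j: "j < n" by auto
    have "(mat_adjoint W * W) $$ (i,j) = conjugate (ws' ! i) \<bullet> ws' ! j"
      using Wc i j by (simp add: row_adj colW)
    also have "\<dots> = cnj (sc (ws ! i)) * sc (ws ! j) * (conjugate (ws ! i) \<bullet> ws ! j)"
      using wsi[OF i] wsi[OF j] i j by (simp add: ws'i conjugate_smult_vec)
    also have "conjugate (ws ! i) \<bullet> ws ! j = ws ! j \<bullet>c ws ! i"
      using wsi[OF i] wsi[OF j] by (simp add: conjugate_vec_sprod_comm)
    also have "cnj (sc (ws ! i)) * sc (ws ! j) * (ws ! j \<bullet>c ws ! i) = 1\<^sub>m n $$ (i,j)"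
    proof (cases "i = j")
      case True
      note c = cnorm_pos[OF wsi[OF i] nz[OF i]]
      define r where "r = Re (ws ! i \<bullet>c ws ! i)"
      have r: "r > 0" using c r_def by simp
      have "cnj (sc (ws ! i)) * sc (ws ! j) * (ws ! j \<bullet>c ws ! i) = complex_of_real ((1 / sqrt r) * (1 / sqrt r) * r)"
        using True c(1) r unfolding sc_def r_def[symmetric] by (simp flip: of_real_mult)
      also have "(1 / sqrt r) * (1 / sqrt r) * r = 1" using r
        by (simp add: field_simps)
      finally show ?thesis using True i by simp
    next
      case False
      thus ?thesis using orth[OF i j] i j by simp
    qed
    finally show "(mat_adjoint W * W) $$ (i,j) = 1\<^sub>m n $$ (i,j)" .
  qed (insert Wc, auto)
  moreover have "col W 0 = sc v \<cdot>\<^sub>v v"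
  proof -
    have "ws ! 0 = v" using hdws ws(3) n by (cases ws, auto)
    thus ?thesis using colW[of 0] ws'i[of 0] n by simp
  qed
  ultimately show ?thesis using Wc by blast
qed



definition bdiag :: "complex mat \<Rightarrow> complex mat \<Rightarrow> complex mat" where
  "bdiag X Y = four_block_mat X (0\<^sub>m (dim_row X) (dim_col Y)) (0\<^sub>m (dim_row Y) (dim_col X)) Y"

lemma bdiag_carrier: "X \<in> carrier_mat a a \<Longrightarrow> Y \<in> carrier_mat b b \<Longrightarrow> bdiag X Y \<in> carrier_mat (a+b) (a+b)"
  unfolding bdiag_def by auto

lemma bdiag_mult: assumes X1: "X1 \<in> carrier_mat a a" and X2: "X2 \<in> carrier_mat a a"
  and Y1: "Y1 \<in> carrier_mat b b" and Y2: "Y2 \<in> carrier_mat b b"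
  shows "bdiag X1 Y1 * bdiag X2 Y2 = bdiag (X1 * X2) (Y1 * Y2)"
proof -
  have "bdiag X1 Y1 * bdiag X2 Y2 = four_block_mat (X1 * X2 + 0\<^sub>m a b * 0\<^sub>m b a) (X1 * 0\<^sub>m a b + 0\<^sub>m a b * Y2)
     (0\<^sub>m b a * X2 + Y1 * 0\<^sub>m b a) (0\<^sub>m b a * 0\<^sub>m a b + Y1 * Y2)"
  proof -
    have d: "dim_row X1 = a" "dim_col X1 = a" "dim_row X2 = a" "dim_col X2 = a"
      "dim_row Y1 = b" "dim_col Y1 = b" "dim_row Y2 = b" "dim_col Y2 = b" using assms by auto
    show ?thesis unfolding bdiag_def d by (rule mult_four_block_mat, insert assms, auto)
  qed
  also have "\<dots> = bdiag (X1 * X2) (Y1 * Y2)"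
    unfolding bdiag_def using assms
    by (intro cong_four_block_mat, auto simp: left_mult_zero_mat right_mult_zero_mat)
  finally show ?thesis .
qed

lemma bdiag_adj: assumes X: "X \<in> carrier_mat a a" and Y: "Y \<in> carrier_mat b b"
  shows "mat_adjoint (bdiag X Y) = bdiag (mat_adjoint X) (mat_adjoint Y)"
  by (rule eq_matI, insert X Y, auto simp: bdiag_def)

lemma bdiag_diag: assumes X: "X \<in> carrier_mat a a" and Y: "Y \<in> carrier_mat b b"
  and "diagonal_mat X" "diagonal_mat Y"
  shows "diagonal_mat (bdiag X Y)"
  using assms unfolding diagonal_mat_def bdiag_def by auto

lemma diag_1: "X \<in> carrier_mat 1 1 \<Longrightarrow> diagonal_mat X"
  unfolding diagonal_mat_def by auto

lemma assoc4: fixes P Q R S :: "complex mat"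
  assumes P: "P \<in> carrier_mat n n" and Q: "Q \<in> carrier_mat n n" and R: "R \<in> carrier_mat n n" and S: "S \<in> carrier_mat n n"
  shows "(P * Q) * (R * S) = P * (Q * R) * S"
proof -
  have "(P * Q) * (R * S) = P * (Q * (R * S))" by (rule assoc_mult_mat[OF P Q mult_carrier_mat[OF R S]])
  also have "Q * (R * S) = (Q * R) * S" by (rule assoc_mult_mat[OF Q R S, symmetric])
  also have "P * ((Q * R) * S) = P * (Q * R) * S" by (rule assoc_mult_mat[OF P mult_carrier_mat[OF Q R] S, symmetric])
  finally show ?thesis .
qed

lemma assoc5: fixes P Q A R S :: "complex mat"
  assumes "P \<in> carrier_mat n n" "Q \<in> carrier_mat n n" "A \<in> carrier_mat n n" "R \<in> carrier_mat n n" "S \<in> carrier_mat n n"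
  shows "(P * Q * A) * (R * S) = P * (Q * A * R) * S"
proof -
  have "P * Q * A = P * (Q * A)" by (rule assoc_mult_mat[OF assms(1-3)])
  hence "(P * Q * A) * (R * S) = (P * (Q * A)) * (R * S)" by simp
  also have "\<dots> = P * ((Q * A) * R) * S" using assoc4[of P n "Q * A" R S] assms by simp
  finally show ?thesis .
qed

lemma spectral: fixes A :: "complex mat"
  assumes "A \<in> carrier_mat n n" "mat_adjoint A = A"
  shows "\<exists>U. U \<in> carrier_mat n n \<and> mat_adjoint U * U = 1\<^sub>m n \<and> diagonal_mat (mat_adjoint U * A * U)"
  using assms
proof (induct n arbitrary: A)
  case 0
  show ?case by (intro exI[of _ "1\<^sub>m 0"]) (insert 0, auto simp: diagonal_mat_def)
next
  case (Suc k A)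
  let ?n = "Suc k"
  have A: "A \<in> carrier_mat ?n ?n" and AH: "mat_adjoint A = A" using Suc.prems by auto
  have "degree (char_poly A) = ?n" using degree_monic_char_poly[OF A] by auto
  hence "\<not> constant (poly (char_poly A))" by (simp add: constant_degree)
  then obtain e where "poly (char_poly A) e = 0" using fundamental_theorem_of_algebra by blast
  hence ev: "eigenvalue A e" using eigenvalue_root_char_poly[OF A] by simp
  define v where "v = find_eigenvector A e"
  have "eigenvector A v e" using find_eigenvector[OF A ev] unfolding v_def .
  hence v: "v \<in> carrier_vec ?n" and v0: "v \<noteq> 0\<^sub>v ?n" and Av: "A *\<^sub>v v = e \<cdot>\<^sub>v v"
    using A unfolding eigenvector_def by auto
  obtain W c where W: "W \<in> carrier_mat ?n ?n" and WW: "mat_adjoint W * W = 1\<^sub>m ?n" and cW: "col W 0 = c \<cdot>\<^sub>v v"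
    using unit_extension[OF v v0] by blast
  have WH: "mat_adjoint W \<in> carrier_mat ?n ?n" using W by simp
  define B where "B = mat_adjoint W * A * W"
  have B: "B \<in> carrier_mat ?n ?n" using W A unfolding B_def by auto
  have "mat_adjoint B = mat_adjoint W * mat_adjoint (mat_adjoint W * A)"
    unfolding B_def by (rule adj_mult[OF _ W], insert W A, auto)
  also have "mat_adjoint (mat_adjoint W * A) = A * W"
    using adj_mult[OF WH A] AH by simp
  finally have BH: "mat_adjoint B = B" unfolding B_def using W A WH
    by (simp add: assoc_mult_mat[OF WH A W])
  have colB: "col B 0 = e \<cdot>\<^sub>v unit_vec ?n 0"
  proof -
    have c0: "col W 0 \<in> carrier_vec ?n" by (rule col_carrier_vec[OF _ W], simp)
    have "col B 0 = (mat_adjoint W * A) *\<^sub>v col W 0" unfolding B_def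
      by (rule col_mult2, insert W A, auto)
    also have "\<dots> = mat_adjoint W *\<^sub>v (A *\<^sub>v col W 0)"
      by (rule assoc_mult_mat_vec[OF WH A c0])
    also have "A *\<^sub>v col W 0 = e \<cdot>\<^sub>v col W 0"
    proof -
      have "A *\<^sub>v col W 0 = c \<cdot>\<^sub>v (e \<cdot>\<^sub>v v)" unfolding cW mult_mat_vec[OF A v] Av ..
      also have "\<dots> = e \<cdot>\<^sub>v (c \<cdot>\<^sub>v v)" by (rule eq_vecI, auto)
      finally show ?thesis unfolding cW .
    qed
    also have "mat_adjoint W *\<^sub>v (e \<cdot>\<^sub>v col W 0) = e \<cdot>\<^sub>v (mat_adjoint W *\<^sub>v col W 0)"
      by (rule mult_mat_vec[OF WH c0])
    also have "mat_adjoint W *\<^sub>v col W 0 = col (mat_adjoint W * W) 0"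
      by (rule col_mult2[symmetric], insert W WH, auto)
    also have "\<dots> = unit_vec ?n 0" unfolding WW by simp
    finally show ?thesis .
  qed
  have B0: "i < ?n \<Longrightarrow> B $$ (i,0) = (if i = 0 then e else 0)" for i
    using arg_cong[OF colB, of "\<lambda>x. x $ i"] B by auto
  have Bsym: "i < ?n \<Longrightarrow> j < ?n \<Longrightarrow> B $$ (i,j) = cnj (B $$ (j,i))" for i j
    using arg_cong[OF BH, of "\<lambda>M. M $$ (i,j)"] B by auto
  have ee: "cnj e = e" using Bsym[of 0 0] B0[of 0] by simp
  have B0': "j < ?n \<Longrightarrow> B $$ (0,j) = (if j = 0 then e else 0)" for j
    using Bsym[of 0 j] B0[of j] ee by auto
  define A3 where "A3 = mat k k (\<lambda>(i,j). B $$ (Suc i, Suc j))"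
  have A3: "A3 \<in> carrier_mat k k" by (simp add: A3_def)
  have A3H: "mat_adjoint A3 = A3"
  proof (rule eq_matI)
    fix i j assume "i < dim_row A3" "j < dim_col A3"
    thus "mat_adjoint A3 $$ (i,j) = A3 $$ (i,j)" using Bsym[of "Suc i" "Suc j"] by (simp add: A3_def)
  qed (auto simp: A3_def)
  obtain U3 where U3: "U3 \<in> carrier_mat k k" and UU3: "mat_adjoint U3 * U3 = 1\<^sub>m k"
    and D3: "diagonal_mat (mat_adjoint U3 * A3 * U3)" using Suc.hyps[OF A3 A3H] by blast
  have U3H: "mat_adjoint U3 \<in> carrier_mat k k" using U3 by simp
  define e1 where "e1 = (mat 1 1 (\<lambda>_. e) :: complex mat)"
  have e1: "e1 \<in> carrier_mat 1 1" by (simp add: e1_def)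
  define E where "E = bdiag (1\<^sub>m 1) U3"
  have E: "E \<in> carrier_mat ?n ?n" unfolding E_def using bdiag_carrier[OF one_carrier_mat[of 1] U3] by simp
  have EH: "mat_adjoint E = bdiag (1\<^sub>m 1) (mat_adjoint U3)" unfolding E_def
    using bdiag_adj[OF one_carrier_mat U3] by simp
  have EHc: "mat_adjoint E \<in> carrier_mat ?n ?n" using E by simp
  have Bblk: "B = bdiag e1 A3"
    by (rule eq_matI, insert B B0 B0', auto simp: bdiag_def e1_def A3_def)
  have EE: "mat_adjoint E * E = 1\<^sub>m ?n"
    unfolding EH unfolding E_def bdiag_mult[OF one_carrier_mat one_carrier_mat U3H U3] UU3
    by (simp add: bdiag_def)
  define U where "U = W * E"
  have U: "U \<in> carrier_mat ?n ?n" unfolding U_def using W E by simp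
  have UH: "mat_adjoint U = mat_adjoint E * mat_adjoint W" unfolding U_def by (rule adj_mult[OF W E])
  have "mat_adjoint U * U = mat_adjoint E * (mat_adjoint W * W) * E"
    unfolding UH unfolding U_def by (rule assoc4[OF EHc WH W E])
  also have "\<dots> = 1\<^sub>m ?n" unfolding WW using EE EHc right_mult_one_mat[OF EHc] by simp
  finally have UU: "mat_adjoint U * U = 1\<^sub>m ?n" .
  have "mat_adjoint U * A * U = mat_adjoint E * B * E"
    unfolding UH unfolding U_def B_def by (rule assoc5[OF EHc WH A W E])
  also have "\<dots> = bdiag (1\<^sub>m 1 * e1 * 1\<^sub>m 1) (mat_adjoint U3 * A3 * U3)"
  proof -
    have c1: "1\<^sub>m 1 * e1 \<in> carrier_mat 1 1" using e1 by simp
    have c2: "mat_adjoint U3 * A3 \<in> carrier_mat k k" using U3H A3 by simp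
    show ?thesis unfolding EH Bblk unfolding E_def using bdiag_mult[OF one_carrier_mat e1 U3H A3] bdiag_mult[OF c1 one_carrier_mat c2 U3] by simp
  qed
  finally have "mat_adjoint U * A * U = bdiag (1\<^sub>m 1 * e1 * 1\<^sub>m 1) (mat_adjoint U3 * A3 * U3)" .
  moreover have "diagonal_mat (bdiag (1\<^sub>m 1 * e1 * 1\<^sub>m 1) (mat_adjoint U3 * A3 * U3))"
    by (rule bdiag_diag[of _ 1 _ k], insert e1 U3 U3H A3 D3, auto intro: diag_1)
  ultimately show ?case using U UU by metis
qed

lemma spectral2: fixes A :: "complex mat"
  assumes "A \<in> carrier_mat n n" "mat_adjoint A = A"
  shows "\<exists>U. U \<in> carrier_mat n n \<and> mat_adjoint U * U = 1\<^sub>m n \<and> U * mat_adjoint U = 1\<^sub>m n \<and> diagonal_mat (mat_adjoint U * A * U)"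
proof -
  obtain U where U: "U \<in> carrier_mat n n" "mat_adjoint U * U = 1\<^sub>m n" "diagonal_mat (mat_adjoint U * A * U)"
    using spectral[OF assms] by blast
  have "U * mat_adjoint U = 1\<^sub>m n" using mat_mult_left_right_inverse[OF adj_carrier[OF U(1)] U(1) U(2)] .
  thus ?thesis using U by blast
qed



definition dm :: "nat \<Rightarrow> (nat \<Rightarrow> complex) \<Rightarrow> complex mat" where
  "dm n f = mat n n (\<lambda>(i,j). if i = j then f i else 0)"

lemma dm_carrier[simp]: "dm n f \<in> carrier_mat n n" by (simp add: dm_def)
lemma dm_dims[simp]: "dim_row (dm n f) = n" "dim_col (dm n f) = n" by (auto simp: dm_def)

lemma mult_dm: assumes Y: "Y \<in> carrier_mat k n"
  shows "Y * dm n f = mat k n (\<lambda>(i,j). Y $$ (i,j) * f j)"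
proof (rule eq_matI)
  fix i j assume "i < dim_row (mat k n (\<lambda>(i,j). Y $$ (i,j) * f j))" "j < dim_col (mat k n (\<lambda>(i,j). Y $$ (i,j) * f j))"
  hence i: "i < k" and j: "j < n" by auto
  have "(Y * dm n f) $$ (i,j) = (\<Sum>l\<in>{0..<n}. Y $$ (i,l) * (if l = j then f j else 0))"
    using Y i j by (auto simp: scalar_prod_def dm_def intro!: sum.cong)
  also have "\<dots> = Y $$ (i,j) * f j"
    by (subst sum.remove[of _ j], insert j, auto intro!: sum.neutral)
  finally show "(Y * dm n f) $$ (i,j) = mat k n (\<lambda>(i,j). Y $$ (i,j) * f j) $$ (i,j)" using i j by simp
qed (insert Y, auto)

lemma dm_mult: "dm n f * dm n g = dm n (\<lambda>i. f i * g i)"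
  by (subst mult_dm[of _ n], simp, rule eq_matI, auto simp: dm_def)

lemma dm_adj: "mat_adjoint (dm n f) = dm n (\<lambda>i. cnj (f i))"
  by (rule eq_matI, auto simp: dm_def)

lemma diag_dm: assumes "Y \<in> carrier_mat n n" "diagonal_mat Y" shows "Y = dm n (\<lambda>i. Y $$ (i,i))"
  by (rule eq_matI, insert assms, auto simp: dm_def diagonal_mat_def)

lemma dm_cong: "(\<And>i. i < n \<Longrightarrow> f i = g i) \<Longrightarrow> dm n f = dm n g"
  by (rule eq_matI, auto simp: dm_def)

lemma mtrace_dm: assumes Y: "Y \<in> carrier_mat n n" shows "mtrace (Y * dm n f) = (\<Sum>i<n. Y $$ (i,i) * f i)"
  unfolding mtrace_def mult_dm[OF Y] using Y by simp

lemma assoc_dim: fixes A B C :: "complex mat"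
  assumes "dim_col A = dim_row B" "dim_col B = dim_row C"
  shows "A * B * C = A * (B * C)"
proof -
  have c: "A \<in> carrier_mat (dim_row A) (dim_col A)" "B \<in> carrier_mat (dim_col A) (dim_col B)"
    "C \<in> carrier_mat (dim_col B) (dim_col C)" using assms by (metis carrier_matI)+
  show ?thesis by (rule assoc_mult_mat[OF c])
qed

lemma duality: fixes G Q :: "complex mat"
  assumes G: "G \<in> carrier_mat m n" and Qf: "cov_feas n P Q"
  shows "\<exists>F. cov_feas m P F \<and> det (mat_adjoint G * F * G + 1\<^sub>m n) = det (G * Q * mat_adjoint G + 1\<^sub>m m)"
proof -
  have Qpsd: "psd n Q" and QP: "Re (mtrace Q) \<le> P" using Qf unfolding cov_feas_def by auto
  have Q: "Q \<in> carrier_mat n n" using Qpsd unfolding psd_def by auto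
  define GH where "GH = mat_adjoint G"
  have GH: "GH \<in> carrier_mat n m" unfolding GH_def using G by simp
  define A where "A = GH * G"
  have A: "A \<in> carrier_mat n n" unfolding A_def using GH G by simp
  have Apsd: "psd n A"
  proof -
    have "psd n (GH * 1\<^sub>m m * mat_adjoint GH)" by (rule psd_congr[OF psd_one GH])
    thus ?thesis unfolding A_def GH_def using G by simp
  qed
  have AH: "mat_adjoint A = A" using Apsd unfolding psd_def by auto
  obtain V where V: "V \<in> carrier_mat n n" and VV: "mat_adjoint V * V = 1\<^sub>m n"
    and VV': "V * mat_adjoint V = 1\<^sub>m n" and Ld: "diagonal_mat (mat_adjoint V * A * V)"
    using spectral2[OF A AH] by blast
  define VH where "VH = mat_adjoint V"
  have VH: "VH \<in> carrier_mat n n" unfolding VH_def using V by simp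
  define L where "L = VH * A * V"
  have L: "L \<in> carrier_mat n n" unfolding L_def using VH A V by simp
  have Lpsd: "psd n L"
  proof -
    have "psd n (VH * A * mat_adjoint VH)" by (rule psd_congr[OF Apsd VH])
    thus ?thesis unfolding L_def VH_def by simp
  qed
  define lam where "lam = (\<lambda>i. Re (L $$ (i,i)))"
  have lam0: "i < n \<Longrightarrow> lam i \<ge> 0" for i using psd_diag(2)[OF Lpsd] unfolding lam_def by auto
  have Ldm: "L = dm n (\<lambda>i. complex_of_real (lam i))"
  proof -
    have "L = dm n (\<lambda>i. L $$ (i,i))" by (rule diag_dm[OF L], insert Ld, simp add: L_def VH_def)
    also have "\<dots> = dm n (\<lambda>i. complex_of_real (lam i))"
      unfolding lam_def by (rule eq_matI, auto simp: dm_def psd_diag(1)[OF Lpsd, symmetric])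
    finally show ?thesis .
  qed
  define D where "D = dm n (\<lambda>i. if lam i > 0 then complex_of_real (1 / sqrt (lam i)) else 0)"
  define S where "S = dm n (\<lambda>i. complex_of_real (sqrt (lam i)))"
  define Pm where "Pm = dm n (\<lambda>i. if lam i > 0 then 1 else 0)"
  have D: "D \<in> carrier_mat n n" and S: "S \<in> carrier_mat n n" and Pm: "Pm \<in> carrier_mat n n"
    unfolding D_def S_def Pm_def by auto
  have aux: "l > 0 \<Longrightarrow> complex_of_real l * complex_of_real (1 / sqrt l) = complex_of_real (sqrt l)" for l
  proof -
    assume l: "l > 0"
    have "l * (1 / sqrt l) = sqrt l" using real_div_sqrt[of l] l by simp
    thus ?thesis by (metis of_real_mult)
  qed
  have LD: "L * D = S" unfolding Ldm D_def S_def dm_mult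
  proof (rule dm_cong)
    fix i assume i: "i < n"
    show "complex_of_real (lam i) * (if 0 < lam i then complex_of_real (1 / sqrt (lam i)) else 0) = complex_of_real (sqrt (lam i))"
      using aux[of "lam i"] lam0[OF i] by (cases "lam i > 0", auto)
  qed
  have SD: "S * D = Pm" unfolding S_def D_def Pm_def dm_mult
    by (rule eq_matI, auto simp: dm_def simp flip: of_real_mult)
  have SS: "S * S = L" unfolding S_def Ldm dm_mult
    by (rule eq_matI, auto simp: dm_def lam0 simp flip: of_real_mult)
  have SH: "mat_adjoint S = S" unfolding S_def dm_adj by simp
  define Z where "Z = VH * Q * V"
  have Z: "Z \<in> carrier_mat n n" unfolding Z_def using VH Q V by simp
  have Zpsd: "psd n Z"
  proof -
    have "psd n (VH * Q * mat_adjoint VH)" by (rule psd_congr[OF Qpsd VH])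
    thus ?thesis unfolding Z_def VH_def by simp
  qed
  define X where "X = G * V * D"
  have X: "X \<in> carrier_mat m n" unfolding X_def using G V D by simp
  define F where "F = X * Z * mat_adjoint X"
  have F: "F \<in> carrier_mat m m" unfolding F_def by (rule mult_carrier_mat[OF mult_carrier_mat[OF X Z] adj_carrier[OF X]])
  have Fpsd: "psd m F" unfolding F_def by (rule psd_congr[OF Zpsd X])
  note dims = carrier_matD[OF G] carrier_matD[OF GH] carrier_matD[OF A] carrier_matD[OF V] carrier_matD[OF VH]
    carrier_matD[OF L] carrier_matD[OF D] carrier_matD[OF S] carrier_matD[OF Pm] carrier_matD[OF Z]
    carrier_matD[OF X] carrier_matD[OF F] carrier_matD[OF Q]
  have VVH: "VH * V = 1\<^sub>m n" unfolding VH_def by (rule VV)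
  have VVH': "V * VH = 1\<^sub>m n" unfolding VH_def by (rule VV')
  have AV: "A * V = V * L"
  proof -
    have "V * L = (V * VH) * A * V" unfolding L_def by (simp add: assoc_dim dims)
    thus ?thesis unfolding VVH' using dims by simp
  qed
  have GHX: "GH * X = V * S"
  proof -
    have "GH * X = A * V * D" unfolding X_def A_def by (simp add: assoc_dim dims)
    also have "\<dots> = V * L * D" by (simp only: AV)
    also have "\<dots> = V * (L * D)" by (simp add: assoc_dim dims)
    finally show ?thesis unfolding LD .
  qed
  have XHG: "mat_adjoint X * G = S * VH"
  proof -
    have "mat_adjoint (GH * X) = mat_adjoint X * G" using adj_mult[OF GH X] unfolding GH_def by simp
    also have "mat_adjoint (GH * X) = S * VH" unfolding GHX adj_mult[OF V S] SH VH_def ..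
    finally show ?thesis by simp
  qed
  have XHX: "mat_adjoint X * X = Pm"
  proof -
    have "mat_adjoint X * X = (mat_adjoint X * G) * V * D" unfolding X_def
      by (simp add: assoc_dim dims)
    also have "\<dots> = S * (VH * V) * D" unfolding XHG by (simp add: assoc_dim dims)
    also have "\<dots> = Pm" unfolding VVH using dims SD by simp
    finally show ?thesis .
  qed
  have trF: "Re (mtrace F) \<le> P"
  proof -
    have "mtrace F = mtrace (X * (Z * mat_adjoint X))" unfolding F_def by (simp add: assoc_dim dims)
    also have "\<dots> = mtrace ((Z * mat_adjoint X) * X)" by (rule mtrace_comm, insert X Z, auto)
    also have "\<dots> = mtrace (Z * Pm)" unfolding XHX[symmetric] by (simp add: assoc_dim dims)
    also have "\<dots> = (\<Sum>i<n. Z $$ (i,i) * (if lam i > 0 then 1 else 0))" unfolding Pm_def by (rule mtrace_dm[OF Z])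
    finally have "Re (mtrace F) = (\<Sum>i<n. Re (Z $$ (i,i)) * (if lam i > 0 then 1 else 0))"
      by (auto simp: Re_sum intro!: sum.cong)
    also have "\<dots> \<le> (\<Sum>i<n. Re (Z $$ (i,i)))"
      by (rule sum_mono, insert psd_diag(2)[OF Zpsd], auto)
    also have "\<dots> = Re (mtrace Z)" unfolding mtrace_def using Z by (simp add: Re_sum)
    also have "mtrace Z = mtrace Q"
    proof -
      have "mtrace Z = mtrace (VH * (Q * V))" unfolding Z_def by (simp add: assoc_dim dims)
      also have "\<dots> = mtrace ((Q * V) * VH)" by (rule mtrace_comm, insert VH Q V, auto)
      also have "\<dots> = mtrace (Q * (V * VH))" by (simp add: assoc_dim dims)
      also have "\<dots> = mtrace Q" unfolding VVH' using dims by simp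
      finally show ?thesis .
    qed
    finally show ?thesis using QP by simp
  qed
  have detL: "det (mat_adjoint G * F * G + 1\<^sub>m n) = det (1\<^sub>m n + Z * L)"
  proof -
    have "mat_adjoint G * F * G = (GH * X) * Z * (mat_adjoint X * G)"
      unfolding F_def GH_def[symmetric] by (simp add: assoc_dim dims)
    also have "\<dots> = V * (S * Z * (S * VH))" unfolding GHX XHG by (simp add: assoc_dim dims)
    finally have e: "mat_adjoint G * F * G = V * (S * Z * (S * VH))" .
    have "det (mat_adjoint G * F * G + 1\<^sub>m n) = det (1\<^sub>m n + V * (S * Z * (S * VH)))"
      unfolding e using V S Z VH by (subst comm_add_mat[of _ n n], auto)
    also have "\<dots> = det (1\<^sub>m n + (S * Z * (S * VH)) * V)" by (rule sylvester, insert V S Z VH, auto)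
    also have "(S * Z * (S * VH)) * V = S * (Z * S)"
      by (simp add: assoc_dim dims VVH)
    also have "det (1\<^sub>m n + S * (Z * S)) = det (1\<^sub>m n + (Z * S) * S)" by (rule sylvester, insert S Z, auto)
    also have "(Z * S) * S = Z * L" unfolding SS[symmetric] by (simp add: assoc_dim dims)
    finally show ?thesis .
  qed
  have detR: "det (G * Q * mat_adjoint G + 1\<^sub>m m) = det (1\<^sub>m n + Z * L)"
  proof -
    have "V * Z * VH = (V * VH) * Q * (V * VH)" unfolding Z_def by (simp add: assoc_dim dims)
    hence Qe: "Q = V * Z * VH" unfolding VVH' using dims by simp
    have e: "G * Q * mat_adjoint G = (G * V) * (Z * VH * GH)" unfolding GH_def[symmetric]
      by (subst Qe, simp add: assoc_dim dims)
    have "det (G * Q * mat_adjoint G + 1\<^sub>m m) = det (1\<^sub>m m + (G * V) * (Z * VH * GH))"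
      unfolding e using G V Z VH GH by (subst comm_add_mat[of _ m m], auto)
    also have "\<dots> = det (1\<^sub>m n + (Z * VH * GH) * (G * V))" by (rule sylvester, insert G V Z VH GH, auto)
    also have "(Z * VH * GH) * (G * V) = Z * L" unfolding L_def A_def
      by (simp add: assoc_dim dims)
    finally show ?thesis .
  qed
  show ?thesis using Fpsd trF detL detR unfolding cov_feas_def by auto
qed



lemma chan_carrier: "chan M N L lam gamma beta theta w \<in> carrier_mat M N"
proof -
  have "A_R M L lam beta \<in> carrier_mat M L" by (simp add: A_R_def)
  moreover have "Gamma_mat L gamma \<in> carrier_mat L L" by (simp add: Gamma_mat_def)
  moreover have "mat_adjoint (A_T N L lam theta w) \<in> carrier_mat L N" by (rule adj_carrier, simp add: A_T_def)
  ultimately show ?thesis unfolding chan_def by (metis mult_carrier_mat smult_carrier_mat)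
qed

lemma dualA: assumes G: "G \<in> carrier_mat M N" and Q: "cov_feas N P Q"
  shows "\<exists>F. cov_feas M P F \<and> objB G F = objA G Q"
proof -
  obtain F where F: "cov_feas M P F" and d: "det (mat_adjoint G * F * G + 1\<^sub>m N) = det (G * Q * mat_adjoint G + 1\<^sub>m M)"
    using duality[OF G Q] by blast
  have "objB G F = objA G Q" unfolding objA_def objB_def using d G by simp
  thus ?thesis using F by blast
qed

lemma dualB: assumes G: "G \<in> carrier_mat M N" and F: "cov_feas M P F"
  shows "\<exists>Q. cov_feas N P Q \<and> objA G Q = objB G F"
proof -
  have GH: "mat_adjoint G \<in> carrier_mat N M" using G by simp
  obtain Q where Q: "cov_feas N P Q" and d: "det (mat_adjoint (mat_adjoint G) * Q * mat_adjoint G + 1\<^sub>m M) = det (mat_adjoint G * F * mat_adjoint (mat_adjoint G) + 1\<^sub>m N)"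
    using duality[OF GH F] by blast
  have "objA G Q = objB G F" unfolding objA_def objB_def using d G by simp
  thus ?thesis using Q by blast
qed

theorem theorem5:
  fixes M N L :: nat and lam P W :: real
    and gamma :: "nat \<Rightarrow> complex" and beta theta :: "nat \<Rightarrow> real"
    and Qs Fd :: "complex mat" and ws wd :: "real vec"
  defines "G \<equiv> chan M N L lam gamma beta theta"
  assumes lam: "lam > 0" and P: "P > 0" and W: "W > 0"
    and beta: "\<forall>l<L. 0 \<le> beta l \<and> beta l \<le> pi"
    and theta: "\<forall>l<L. 0 \<le> theta l \<and> theta l \<le> pi"
    and optA: "optA G N W P Qs ws"
    and optB: "optB G M N W P Fd wd"
  shows "objA (G ws) Qs = objB (G wd) Fd \<and>
         (\<forall>Fs. optB_w G M P ws Fs \<longrightarrow>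
             optB G M N W P Fs ws \<and> objB (G ws) Fs = objB (G wd) Fd) \<and>
         (\<forall>Qd. optA_w G N P wd Qd \<longrightarrow>
             optA G N W P Qd wd \<and> objA (G ws) Qs = objA (G wd) Qd)"
proof -
  have Gc: "\<And>w. G w \<in> carrier_mat M N" unfolding G_def by (rule chan_carrier)
  have Qs: "cov_feas N P Qs" and ws: "ws \<in> posset N W"
    and maxA: "\<And>Q' w'. cov_feas N P Q' \<Longrightarrow> w' \<in> posset N W \<Longrightarrow> objA (G w') Q' \<le> objA (G ws) Qs"
    using optA unfolding optA_def by auto
  have Fd: "cov_feas M P Fd" and wd: "wd \<in> posset N W"
    and maxB: "\<And>F' w'. cov_feas M P F' \<Longrightarrow> w' \<in> posset N W \<Longrightarrow> objB (G w') F' \<le> objB (G wd) Fd"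
    using optB unfolding optB_def by auto
  obtain F1 where F1: "cov_feas M P F1" and eF1: "objB (G ws) F1 = objA (G ws) Qs"
    using dualA[OF Gc Qs] by blast
  obtain Q1 where Q1: "cov_feas N P Q1" and eQ1: "objA (G wd) Q1 = objB (G wd) Fd"
    using dualB[OF Gc Fd] by blast
  have eq1: "objA (G ws) Qs = objB (G wd) Fd"
    using maxB[OF F1 ws] maxA[OF Q1 wd] eF1 eQ1 by linarith
  have part2: "\<forall>Fs. optB_w G M P ws Fs \<longrightarrow> optB G M N W P Fs ws \<and> objB (G ws) Fs = objB (G wd) Fd"
  proof (intro allI impI)
    fix Fs assume h: "optB_w G M P ws Fs"
    have Fs: "cov_feas M P Fs" and mx: "\<And>F'. cov_feas M P F' \<Longrightarrow> objB (G ws) F' \<le> objB (G ws) Fs"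
      using h unfolding optB_w_def by auto
    have e: "objB (G ws) Fs = objB (G wd) Fd" using mx[OF F1] eF1 eq1 maxB[OF Fs ws] by linarith
    have "optB G M N W P Fs ws" unfolding optB_def using Fs ws maxB e by auto
    thus "optB G M N W P Fs ws \<and> objB (G ws) Fs = objB (G wd) Fd" using e by blast
  qed
  have part3: "\<forall>Qd. optA_w G N P wd Qd \<longrightarrow> optA G N W P Qd wd \<and> objA (G ws) Qs = objA (G wd) Qd"
  proof (intro allI impI)
    fix Qd assume h: "optA_w G N P wd Qd"
    have Qd: "cov_feas N P Qd" and mx: "\<And>Q'. cov_feas N P Q' \<Longrightarrow> objA (G wd) Q' \<le> objA (G wd) Qd"
      using h unfolding optA_w_def by auto
    have e: "objA (G ws) Qs = objA (G wd) Qd" using mx[OF Q1] eQ1 eq1 maxA[OF Qd wd] by linarith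
    have "optA G N W P Qd wd" unfolding optA_def using Qd wd maxA e by auto
    thus "optA G N W P Qd wd \<and> objA (G ws) Qs = objA (G wd) Qd" using e by blast
  qed
  show ?thesis using eq1 part2 part3 by blast
qed

end
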